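(* Let $H$ be a 2-dimensional non-abelian simply connected Lie group, $u,w$ a basis of left-invariant vector fields with $[u,w]=2u$, and for real $a,b$ with $ab=0$ let $\nabla=\nabla(a,b)$ be the left-invariant torsion-free connection on $H$ with $\nabla_u u=(3+a)u-aw$, $\nabla_u w=au+(3-a)w$, $\nabla_w u=(a-2)u+(3-a)w$, $\nabla_w w=(a+b-1)u+(2-a)w$. If a left-invariant symmetric 2-tensor on $H$ equals $\mathcal{L}\beta$ for some 1-form $\beta$ on $H$, then it also equals $\mathcal{L}\alpha$ for some left-invariant 1-form $\alpha$ on $H$.
   Context: All objects are $C^\infty$. $\mathcal{L}$ is the Killing operator of $\nabla$: $(\mathcal{L}\xi)(x,y)=\tfrac12[(\nabla_x\xi)(y)+(\nabla_y\xi)(x)]$ for 1-forms $\xi$. *)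

theory Defs
  imports "HOL-Analysis.Analysis"
begin

text \<open>Concrete model of the 2-dimensional simply connected non-abelian Lie group H:
  H = real \<times> real with product (x1,y1)(x2,y2) = (x1 + exp(2 y1) x2, y1 + y2).
  Left-invariant vector fields: u = exp(2y) d/dx, w = - d/dy; then [u,w] = 2u.\<close>

definition hmult :: "real \<times> real \<Rightarrow> real \<times> real \<Rightarrow> real \<times> real" where
  "hmult g h = (fst g + exp (2 * snd g) * fst h, snd g + snd h)"

definition px :: "(real \<times> real \<Rightarrow> real) \<Rightarrow> real \<times> real \<Rightarrow> real" where
  "px f p = frechet_derivative f (at p) (1, 0)"

definition py :: "(real \<times> real \<Rightarrow> real) \<Rightarrow> real \<times> real \<Rightarrow> real" where
  "py f p = frechet_derivative f (at p) (0, 1)"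

fun Ck :: "nat \<Rightarrow> (real \<times> real \<Rightarrow> real) \<Rightarrow> bool" where
  "Ck 0 f = continuous_on UNIV f"
| "Ck (Suc n) f = ((\<forall>p. f differentiable (at p)) \<and> Ck n (px f) \<and> Ck n (py f))"

definition smooth :: "(real \<times> real \<Rightarrow> real) \<Rightarrow> bool" where
  "smooth f = (\<forall>n. Ck n f)"

datatype frame = U | W

definition vf :: "frame \<Rightarrow> (real \<times> real \<Rightarrow> real) \<Rightarrow> real \<times> real \<Rightarrow> real" where
  "vf X f p = (case X of U \<Rightarrow> exp (2 * snd p) * px f p | W \<Rightarrow> - py f p)"

text \<open>The connection nabla(a,b): coefficients of nabla_X Y in the frame (u,w).\<close>
fun conn :: "real \<Rightarrow> real \<Rightarrow> frame \<Rightarrow> frame \<Rightarrow> real \<times> real" where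
  "conn a b U U = (3 + a, - a)"
| "conn a b U W = (a, 3 - a)"
| "conn a b W U = (a - 2, 3 - a)"
| "conn a b W W = (a + b - 1, 2 - a)"

text \<open>A 1-form is represented by its values on the global frame: beta X = beta(X).
  Covariant derivative (nabla_X beta)(Y) = X(beta(Y)) - beta(nabla_X Y).\<close>
definition covd :: "real \<Rightarrow> real \<Rightarrow> (frame \<Rightarrow> real \<times> real \<Rightarrow> real) \<Rightarrow> frame \<Rightarrow> frame \<Rightarrow> real \<times> real \<Rightarrow> real" where
  "covd a b \<beta> X Y p = vf X (\<beta> Y) p
     - (fst (conn a b X Y) * \<beta> U p + snd (conn a b X Y) * \<beta> W p)"

definition killing :: "real \<Rightarrow> real \<Rightarrow> (frame \<Rightarrow> real \<times> real \<Rightarrow> real) \<Rightarrow> frame \<Rightarrow> frame \<Rightarrow> real \<times> real \<Rightarrow> real" where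
  "killing a b \<beta> X Y p = (covd a b \<beta> X Y p + covd a b \<beta> Y X p) / 2"

end

theory Submission
  imports Defs
begin

lemma hasd_partials:
  assumes "F differentiable (at p)"
  shows "(F has_derivative (\<lambda>h. fst h * px F p + snd h * py F p)) (at p)"
proof -
  let ?D = "frechet_derivative F (at p)"
  have d: "(F has_derivative ?D) (at p)" using assms frechet_derivative_works by blast
  have lin: "linear ?D" using has_derivative_linear[OF d] .
  have "?D h = fst h * px F p + snd h * py F p" for h
  proof (cases h)
    case (Pair h1 h2)
    have "(h1, h2) = h1 *\<^sub>R ((1::real),(0::real)) + h2 *\<^sub>R (0,1)" by simp
    then have "?D (h1,h2) = ?D (h1 *\<^sub>R (1,0) + h2 *\<^sub>R (0,1))" by metis
    also have "\<dots> = h1 * ?D (1,0) + h2 * ?D (0,1)"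
      by (simp only: linear_add[OF lin] linear_cmul[OF lin] real_scaleR_def)
    finally show ?thesis using Pair by (simp add: px_def py_def)
  qed
  then have "?D = (\<lambda>h. fst h * px F p + snd h * py F p)" by auto
  with d show ?thesis by simp
qed

lemma px_of_hasd: "(F has_derivative D) (at p) \<Longrightarrow> px F p = D (1,0)"
  unfolding px_def using frechet_derivative_at by metis
lemma py_of_hasd: "(F has_derivative D) (at p) \<Longrightarrow> py F p = D (0,1)"
  unfolding py_def using frechet_derivative_at by metis

lemma rel_deriv:
  fixes H F G I :: "real \<times> real \<Rightarrow> real"
  assumes rel: "\<And>q. d * exp (2 * snd q) * H q + c1 * F q + c2 * G q + c3 * I q + c4 * J q + k = 0"
    and dH: "H differentiable (at p)" and dF: "F differentiable (at p)"
    and dG: "G differentiable (at p)" and dI: "I differentiable (at p)" and dJ: "J differentiable (at p)"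
  shows "d * exp (2 * snd p) * px H p + c1 * px F p + c2 * px G p + c3 * px I p + c4 * px J p = 0"
    and "d * (2 * exp (2 * snd p) * H p + exp (2 * snd p) * py H p) + c1 * py F p + c2 * py G p + c3 * py I p + c4 * py J p = 0"
proof -
  have e: "((\<lambda>q::real\<times>real. exp (2 * snd q)) has_derivative (\<lambda>h. exp (2 * snd p) * (2 * snd h))) (at p)"
    by (auto intro!: derivative_eq_intros)
  have "((\<lambda>q. d * exp (2 * snd q) * H q + c1 * F q + c2 * G q + c3 * I q + c4 * J q + k) has_derivative
     (\<lambda>h. d * (exp (2 * snd p) * (fst h * px H p + snd h * py H p) + exp (2 * snd p) * (2 * snd h) * H p)
       + c1 * (fst h * px F p + snd h * py F p) + c2 * (fst h * px G p + snd h * py G p)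
       + c3 * (fst h * px I p + snd h * py I p) + c4 * (fst h * px J p + snd h * py J p))) (at p)"
    by (auto intro!: derivative_eq_intros e hasd_partials dH dF dG dI dJ simp: algebra_simps)
  moreover have "((\<lambda>q. d * exp (2 * snd q) * H q + c1 * F q + c2 * G q + c3 * I q + c4 * J q + k) has_derivative (\<lambda>h. 0)) (at p)"
    using rel by simp
  ultimately have eq: "(\<lambda>h. d * (exp (2 * snd p) * (fst h * px H p + snd h * py H p) + exp (2 * snd p) * (2 * snd h) * H p)
       + c1 * (fst h * px F p + snd h * py F p) + c2 * (fst h * px G p + snd h * py G p)
       + c3 * (fst h * px I p + snd h * py I p) + c4 * (fst h * px J p + snd h * py J p)) = (\<lambda>h::real\<times>real. 0)"
    using has_derivative_unique by blast
  from fun_cong[OF eq, of "(1,0)"] show "d * exp (2 * snd p) * px H p + c1 * px F p + c2 * px G p + c3 * px I p + c4 * px J p = 0"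
    by (simp add: algebra_simps)
  from fun_cong[OF eq, of "(0,1)"] show "d * (2 * exp (2 * snd p) * H p + exp (2 * snd p) * py H p) + c1 * py F p + c2 * py G p + c3 * py I p + c4 * py J p = 0"
    by (simp add: algebra_simps)
qed

lemma derx: "F differentiable (at (s,y)) \<Longrightarrow> ((\<lambda>s. F (s,y)) has_real_derivative px F (s,y)) (at s)"
proof -
  assume "F differentiable (at (s,y))"
  from hasd_partials[OF this] have d: "(F has_derivative (\<lambda>h. fst h * px F (s,y) + snd h * py F (s,y))) (at (s,y))" .
  have "((\<lambda>s. F (s,y)) has_derivative (\<lambda>h. fst (h,0::real) * px F (s,y) + snd (h,0::real) * py F (s,y))) (at s)"
    by (rule has_derivative_compose[where g=F and f="\<lambda>s. (s,y)", OF _ d, simplified]) (auto intro!: derivative_eq_intros)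
  then show ?thesis unfolding has_field_derivative_def by (rule has_derivative_eq_rhs) (auto simp: fun_eq_iff)
qed

lemma dery: "F differentiable (at (x,s)) \<Longrightarrow> ((\<lambda>s. F (x,s)) has_real_derivative py F (x,s)) (at s)"
proof -
  assume "F differentiable (at (x,s))"
  from hasd_partials[OF this] have d: "(F has_derivative (\<lambda>h. fst h * px F (x,s) + snd h * py F (x,s))) (at (x,s))" .
  have "((\<lambda>s. F (x,s)) has_derivative (\<lambda>h. fst (0::real,h) * px F (x,s) + snd (0::real,h) * py F (x,s))) (at s)"
    by (rule has_derivative_compose[where g=F and f="\<lambda>s. (x,s)", OF _ d, simplified]) (auto intro!: derivative_eq_intros)
  then show ?thesis unfolding has_field_derivative_def by (rule has_derivative_eq_rhs) (auto simp: fun_eq_iff)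
qed


lemma dist_small: "\<bar>\<xi> - x0\<bar> < t \<Longrightarrow> \<bar>\<eta> - y0\<bar> < t \<Longrightarrow> dist (\<xi>, \<eta>) (x0, y0) < 2 * t"
proof -
  assume "\<bar>\<xi> - x0\<bar> < t" "\<bar>\<eta> - y0\<bar> < t"
  moreover have "dist (\<xi>, \<eta>) (x0, y0) \<le> \<bar>\<xi> - x0\<bar> + \<bar>\<eta> - y0\<bar>"
    unfolding dist_Pair_Pair dist_real_def by (metis abs_idempotent sqrt_sum_squares_le_sum_abs)
  ultimately show ?thesis by linarith
qed

lemma abs_aux: "\<bar>u - A\<bar> < \<bar>A - B\<bar> / 2 \<Longrightarrow> \<bar>v - B\<bar> < \<bar>A - B\<bar> / 2 \<Longrightarrow> v = u \<Longrightarrow> False"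
  for u v A B :: real by (cases "A \<le> B"; cases "u \<le> A"; cases "v \<le> B"; simp)

lemma schwarz:
  fixes F :: "real \<times> real \<Rightarrow> real"
  assumes dF: "\<And>q. F differentiable (at q)"
    and dX: "\<And>q. px F differentiable (at q)"
    and dY: "\<And>q. py F differentiable (at q)"
    and cA: "continuous_on UNIV (px (py F))"
    and cB: "continuous_on UNIV (py (px F))"
  shows "px (py F) p = py (px F) p"
proof (rule ccontr)
  assume ne: "px (py F) p \<noteq> py (px F) p"
  obtain x0 y0 where p: "p = (x0, y0)" by (cases p)
  let ?A = "px (py F)" and ?B = "py (px F)"
  define D where "D t = F (x0 + t, y0 + t) - F (x0 + t, y0) - F (x0, y0 + t) + F (x0, y0)" for t
  have c1: "\<exists>\<xi> \<eta>. \<bar>\<xi> - x0\<bar> < t \<and> \<bar>\<eta> - y0\<bar> < t \<and> D t = t * (t * ?B (\<xi>, \<eta>))" if t: "t > 0" for t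
  proof -
    have "\<exists>z. x0 < z \<and> z < x0 + t \<and>
      (F (x0 + t, y0 + t) - F (x0 + t, y0)) - (F (x0, y0 + t) - F (x0, y0)) = ((x0 + t) - x0) * (px F (z, y0 + t) - px F (z, y0))"
      by (rule MVT2[where f="\<lambda>s. F (s, y0 + t) - F (s, y0)"]) (use t in \<open>auto intro!: derivative_eq_intros derx dF\<close>)
    then obtain \<xi> where \<xi>: "x0 < \<xi>" "\<xi> < x0 + t"
      "D t = t * (px F (\<xi>, y0 + t) - px F (\<xi>, y0))" unfolding D_def by (auto simp: algebra_simps)
    have "\<exists>z. y0 < z \<and> z < y0 + t \<and> px F (\<xi>, y0 + t) - px F (\<xi>, y0) = ((y0 + t) - y0) * ?B (\<xi>, z)"
      by (rule MVT2[where f="\<lambda>s. px F (\<xi>, s)"]) (use t in \<open>auto intro!: dery dX\<close>)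
    then obtain \<eta> where "y0 < \<eta>" "\<eta> < y0 + t" "px F (\<xi>, y0 + t) - px F (\<xi>, y0) = t * ?B (\<xi>, \<eta>)" by auto
    with \<xi> show ?thesis by (intro exI[of _ \<xi>] exI[of _ \<eta>]) auto
  qed
  have c2: "\<exists>\<xi> \<eta>. \<bar>\<xi> - x0\<bar> < t \<and> \<bar>\<eta> - y0\<bar> < t \<and> D t = t * (t * ?A (\<xi>, \<eta>))" if t: "t > 0" for t
  proof -
    have "\<exists>z. y0 < z \<and> z < y0 + t \<and>
      (F (x0 + t, y0 + t) - F (x0, y0 + t)) - (F (x0 + t, y0) - F (x0, y0)) = ((y0 + t) - y0) * (py F (x0 + t, z) - py F (x0, z))"
      by (rule MVT2[where f="\<lambda>s. F (x0 + t, s) - F (x0, s)"]) (use t in \<open>auto intro!: derivative_eq_intros dery dF\<close>)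
    then obtain \<eta> where \<eta>: "y0 < \<eta>" "\<eta> < y0 + t"
      "D t = t * (py F (x0 + t, \<eta>) - py F (x0, \<eta>))" unfolding D_def by (auto simp: algebra_simps)
    have "\<exists>z. x0 < z \<and> z < x0 + t \<and> py F (x0 + t, \<eta>) - py F (x0, \<eta>) = ((x0 + t) - x0) * ?A (z, \<eta>)"
      by (rule MVT2[where f="\<lambda>s. py F (s, \<eta>)"]) (use t in \<open>auto intro!: derx dY\<close>)
    then obtain \<xi> where "x0 < \<xi>" "\<xi> < x0 + t" "py F (x0 + t, \<eta>) - py F (x0, \<eta>) = t * ?A (\<xi>, \<eta>)" by auto
    with \<eta> show ?thesis by (intro exI[of _ \<xi>] exI[of _ \<eta>]) auto
  qed
  define e where "e = \<bar>?A p - ?B p\<bar> / 2"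
  have e: "e > 0" using ne by (simp add: e_def)
  from cA have "continuous (at p) ?A" using continuous_on_eq_continuous_at[of UNIV] by blast
  then obtain d1 where d1: "d1 > 0" "\<And>q. dist q p < d1 \<Longrightarrow> dist (?A q) (?A p) < e"
    using e unfolding continuous_at_eps_delta by blast
  from cB have "continuous (at p) ?B" using continuous_on_eq_continuous_at[of UNIV] by blast
  then obtain d2 where d2: "d2 > 0" "\<And>q. dist q p < d2 \<Longrightarrow> dist (?B q) (?B p) < e"
    using e unfolding continuous_at_eps_delta by blast
  define t where "t = min d1 d2 / 2"
  have t: "t > 0" using d1 d2 by (simp add: t_def)
  obtain \<xi> \<eta> where 1: "\<bar>\<xi> - x0\<bar> < t" "\<bar>\<eta> - y0\<bar> < t" "D t = t * (t * ?B (\<xi>, \<eta>))" using c1[OF t] by blast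
  obtain \<xi>' \<eta>' where 2: "\<bar>\<xi>' - x0\<bar> < t" "\<bar>\<eta>' - y0\<bar> < t" "D t = t * (t * ?A (\<xi>', \<eta>'))" using c2[OF t] by blast
  have eq: "?B (\<xi>, \<eta>) = ?A (\<xi>', \<eta>')" using 1(3) 2(3) t by simp
  have "dist (\<xi>, \<eta>) p < d2" using dist_small[OF 1(1,2)] p t_def by simp
  then have b: "\<bar>?B (\<xi>, \<eta>) - ?B p\<bar> < e" using d2 by (simp add: dist_real_def)
  have "dist (\<xi>', \<eta>') p < d1" using dist_small[OF 2(1,2)] p t_def by simp
  then have a: "\<bar>?A (\<xi>', \<eta>') - ?A p\<bar> < e" using d1 by (simp add: dist_real_def)
  from a b eq show False unfolding e_def by (rule abs_aux)
qed


lemma sm_px: "smooth F \<Longrightarrow> smooth (px F)" and sm_py: "smooth F \<Longrightarrow> smooth (py F)"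
  unfolding smooth_def by (metis Ck.simps(2))+

lemma sm_diff: "smooth F \<Longrightarrow> F differentiable (at q)"
  unfolding smooth_def by (metis Ck.simps(2))

lemma sm_cont: "smooth F \<Longrightarrow> continuous_on UNIV F"
  unfolding smooth_def by (metis Ck.simps(1))

lemma schw: "smooth F \<Longrightarrow> px (py F) p = py (px F) p"
  by (rule schwarz) (auto intro: sm_diff sm_px sm_py sm_cont)

lemma vf_const: "vf X (\<lambda>q. c) p = 0"
  by (cases X) (simp_all add: vf_def px_def py_def)

theorem lemma12p5:
  fixes a b :: real and S :: "frame \<Rightarrow> frame \<Rightarrow> real"
  assumes "a * b = 0"
    and "\<And>X Y. S X Y = S Y X"
    and "smooth (\<beta> U)" and "smooth (\<beta> W)"
    and "\<And>X Y p. killing a b \<beta> X Y p = S X Y"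
  shows "\<exists>\<alpha> :: frame \<Rightarrow> real. \<forall>X Y p. killing a b (\<lambda>Z q. \<alpha> Z) X Y p = S X Y"
proof -
  note ab = assms(1)
  define f where "f = \<beta> U"
  define g where "g = \<beta> W"
  have sf: "smooth f" using assms(3) f_def by simp
  have sg: "smooth g" using assms(4) g_def by simp
  note D = sm_diff sm_px sm_py sf sg
  have K: "\<And>X Y p. killing a b \<beta> X Y p = S X Y" by (rule assms(5))
  have SUW: "S W U = S U W" using assms(2) by simp
  have H1: "\<And>q. 1 * exp (2 * snd q) * px f q + (-(3+a)) * f q + a * g q + 0 * f q + 0 * f q + (- S U U) = 0"
  proof -
    fix q show "1 * exp (2 * snd q) * px f q + (-(3+a)) * f q + a * g q + 0 * f q + 0 * f q + (- S U U) = 0"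
      using K[of U U q] by (simp add: killing_def covd_def vf_def f_def g_def algebra_simps)
  qed
  have H2: "\<And>q. 1 * exp (2 * snd q) * px g q + (-1) * py f q + (-(2*a-2)) * f q + (-(6-2*a)) * g q + 0 * f q + (- 2 * S U W) = 0"
  proof -
    fix q show "1 * exp (2 * snd q) * px g q + (-1) * py f q + (-(2*a-2)) * f q + (-(6-2*a)) * g q + 0 * f q + (- 2 * S U W) = 0"
      using K[of U W q] by (simp add: killing_def covd_def vf_def f_def g_def algebra_simps)
  qed
  have H3: "\<And>q. 0 * exp (2 * snd q) * f q + (-1) * py g q + (-(a+b-1)) * f q + (-(2-a)) * g q + 0 * f q + (- S W W) = 0"
  proof -
    fix q show "0 * exp (2 * snd q) * f q + (-1) * py g q + (-(a+b-1)) * f q + (-(2-a)) * g q + 0 * f q + (- S W W) = 0"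
      using K[of W W q] by (simp add: killing_def covd_def vf_def f_def g_def algebra_simps)
  qed
  have Z: "exp (2 * snd q) * px (py f) q = (a^2+a*b-3*a-6) * f q + (4*a-a^2) * g q + (a+3) * py f q - 2 * S U U + a * S W W" for q
  proof -
    note e1 = H1[of q] and e3 = H3[of q]
    have e: "1 * (2 * exp (2 * snd q) * px f q + exp (2 * snd q) * py (px f) q) + (-(3+a)) * py f q + a * py g q + 0 * py f q + 0 * py f q = 0"
      by (rule rel_deriv(2)[OF H1]; (intro sm_diff sm_px sm_py sf sg)+)
    have s: "py (px f) q = px (py f) q" using schw[OF sf] by simp
    from e1 e3 e s show ?thesis by algebra
  qed
  have Y: "py (py f) q = (-(a^2) - 3*a*b + 4*a + 3*b - 3) * f q + (a^2 + a*b - 5*a + 12) * g q + (2-a) * py f q + (1-a-b) * S U U + 2*a * S U W + (6-2*a) * S W W" for q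
  proof -
    note e1 = H1[of q] and e2 = H2[of q] and e3 = H3[of q]
    have eA: "1 * (2 * exp (2 * snd q) * px g q + exp (2 * snd q) * py (px g) q) + (-1) * py (py f) q + (-(2*a-2)) * py f q + (-(6-2*a)) * py g q + 0 * py f q = 0"
      by (rule rel_deriv(2)[OF H2]; (intro sm_diff sm_px sm_py sf sg)+)
    have eB: "0 * exp (2 * snd q) * px f q + (-1) * px (py g) q + (-(a+b-1)) * px f q + (-(2-a)) * px g q + 0 * px f q = 0"
      by (rule rel_deriv(1)[OF H3]; (intro sm_diff sm_px sm_py sf sg)+)
    have s: "py (px g) q = px (py g) q" using schw[OF sg] by simp
    from e1 e2 e3 eA eB s show ?thesis by algebra
  qed
  have Zrel: "\<And>q. 1 * exp (2 * snd q) * px (py f) q + (-(a^2+a*b-3*a-6)) * f q + (-(4*a-a^2)) * g q + (-(a+3)) * py f q + 0 * f q + (2 * S U U - a * S W W) = 0"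
    using Z by (simp add: algebra_simps)
  have Yrel: "\<And>q. 0 * exp (2 * snd q) * f q + (-1) * py (py f) q + (-(a^2) - 3*a*b + 4*a + 3*b - 3) * f q + (a^2 + a*b - 5*a + 12) * g q + (2-a) * py f q + ((1-a-b) * S U U + 2*a * S U W + (6-2*a) * S W W) = 0"
    using Y by (simp add: algebra_simps)
  have R: "(48 - 24*a - 6*a*b) * f q + (24*a-36) * g q - 24 * py f q + (14 - 8*a - 6*b + 2*a*b) * S U U + (16*a - 2*a*b - 24) * S U W + (18-8*a) * S W W = 0" for q
  proof -
    note e1 = H1[of q] and e2 = H2[of q] and e3 = H3[of q] and z = Z[of q] and y = Y[of q]
    have Zpy: "1 * (2 * exp (2 * snd q) * px (py f) q + exp (2 * snd q) * py (px (py f)) q) + (-(a^2+a*b-3*a-6)) * py f q + (-(4*a-a^2)) * py g q + (-(a+3)) * py (py f) q + 0 * py f q = 0"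
      by (rule rel_deriv(2)[OF Zrel]; (intro sm_diff sm_px sm_py sf sg)+)
    have Ypx: "0 * exp (2 * snd q) * px f q + (-1) * px (py (py f)) q + (-(a^2) - 3*a*b + 4*a + 3*b - 3) * px f q + (a^2 + a*b - 5*a + 12) * px g q + (2-a) * px (py f) q = 0"
      by (rule rel_deriv(1)[OF Yrel]; (intro sm_diff sm_px sm_py sf sg)+)
    have s: "px (py (py f)) q = py (px (py f)) q" using schw[OF sm_py[OF sf]] by simp
    from e1 e2 e3 z y Zpy Ypx s show ?thesis by algebra
  qed
  have Rrel: "\<And>q. 0 * exp (2 * snd q) * f q + (48 - 24*a - 6*a*b) * f q + (24*a-36) * g q + (- 24) * py f q + 0 * f q + ((14 - 8*a - 6*b + 2*a*b) * S U U + (16*a - 2*a*b - 24) * S U W + (18-8*a) * S W W) = 0"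
    using R by (simp add: algebra_simps)
  have r1: "(12*a+48) * f q + (-12*a-18) * g q + (4*a+11+9*b) * S U U + (12-8*a) * S U W + (4*a-27) * S W W = 0" for q
  proof -
    note e1 = H1[of q] and e2 = H2[of q] and z = Z[of q] and r = R[of q]
    have Rx: "0 * exp (2 * snd q) * px f q + (48 - 24*a - 6*a*b) * px f q + (24*a-36) * px g q + (- 24) * px (py f) q + 0 * px f q = 0"
      by (rule rel_deriv(1)[OF Rrel]; (intro sm_diff sm_px sm_py sf sg)+)
    from e1 e2 z r Rx ab show ?thesis by algebra
  qed
  have r2: "(3-3*a-3*b) * f q + (3*a-18) * g q + (2*a+2*b-2) * S U U - 4*a * S U W + (2*a-9) * S W W = 0" for q
  proof -
    note e3 = H3[of q] and y = Y[of q] and r = R[of q]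
    have Ry: "0 * (2 * exp (2 * snd q) * f q + exp (2 * snd q) * py f q) + (48 - 24*a - 6*a*b) * py f q + (24*a-36) * py g q + (- 24) * py (py f) q + 0 * py f q = 0"
      by (rule rel_deriv(2)[OF Rrel]; (intro sm_diff sm_px sm_py sf sg)+)
    from e3 y r Ry ab show ?thesis by algebra
  qed
  have kc: "killing a b (\<lambda>Z q. \<alpha> Z) X Y p =
      - (fst (conn a b X Y) * \<alpha> U + snd (conn a b X Y) * \<alpha> W + fst (conn a b Y X) * \<alpha> U + snd (conn a b Y X) * \<alpha> W) / 2"
    for \<alpha> X Y p by (simp add: killing_def covd_def vf_const algebra_simps)
  show ?thesis
  proof (cases "5*a + 45 + 3*b = 0")
    case False
    have cf: "f q = f (0,0)" and cg: "g q = g (0,0)" for q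
    proof -
      note x1 = r1[of q] and y1 = r1[of "(0,0)"] and x2 = r2[of q] and y2 = r2[of "(0,0)"]
      have "(5*a + 45 + 3*b) * (f q - f (0,0)) = 0" using x1 y1 x2 y2 ab by algebra
      then show "f q = f (0,0)" using False by simp
      have "(5*a + 45 + 3*b) * (g q - g (0,0)) = 0" using x1 y1 x2 y2 ab by algebra
      then show "g q = g (0,0)" using False by simp
    qed
    have bc: "\<beta> = (\<lambda>Z q. \<beta> Z (0,0))"
    proof (intro ext)
      fix Z q show "\<beta> Z q = \<beta> Z (0,0)"
        using cf[of q] cg[of q] by (cases Z) (simp_all add: f_def g_def)
    qed
    show ?thesis
    proof (intro exI allI)
      fix X Y p show "killing a b (\<lambda>Z q. \<beta> Z (0,0)) X Y p = S X Y"
        using K[of X Y p] bc by metis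
    qed
  next
    case True
    have "a = 0 \<or> b = 0" using ab by simp
    then have cases: "(a = 0 \<and> b = -15) \<or> (a = -9 \<and> b = 0)" using True by auto
    note x1 = r1[of "(0,0)"] and x2 = r2[of "(0,0)"]
    from cases show ?thesis
    proof
      assume ab0: "a = 0 \<and> b = -15"
      have rel: "46 * S U U - 6 * S U W + 9 * S W W = 0" using x1 x2 ab0 by simp
      define \<alpha> where "\<alpha> Z = (case Z of U \<Rightarrow> - S U U / 3 | W \<Rightarrow> (- S U U / 3 - S U W) / 3)" for Z
      show ?thesis
      proof (intro exI allI)
        fix X Y p show "killing a b (\<lambda>Z q. \<alpha> Z) X Y p = S X Y"
          unfolding kc using ab0 rel SUW by (cases X; cases Y) (simp_all add: \<alpha>_def field_simps)
      qed
    next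
      assume ab0: "a = -9 \<and> b = 0"
      have rel: "-5 * S U U + 12 * S U W - 9 * S W W = 0" using x1 x2 ab0 by simp
      define \<alpha> where "\<alpha> Z = (case Z of U \<Rightarrow> (-12 * S U U + 9 * S U W) / 18 | W \<Rightarrow> (6 * S U W - 10 * S U U) / 18)" for Z
      show ?thesis
      proof (intro exI allI)
        fix X Y p show "killing a b (\<lambda>Z q. \<alpha> Z) X Y p = S X Y"
          unfolding kc using ab0 rel SUW by (cases X; cases Y) (simp_all add: \<alpha>_def field_simps)
      qed
    qed
  qed
qed
end
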